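(* Let $G_1,G_2$ be regular (finite, simple, undirected) graphs and let $G$ be a graph (without loops, unweighted, possibly directed) with $2$ vertices. Then \[ E(G[G_1,G_2])\ge E(G)+E(G_1)+E(G_2). \]
   Context: The energy $E(H)$ of a (di)graph $H$ is the sum of the absolute values of the eigenvalues (with multiplicity) of its adjacency matrix. For a graph $G$ on vertices $v_1,v_2$ with adjacency matrix $(a_{ij})$, the joined union $G[G_1,G_2]$ has adjacency matrix $\begin{pmatrix} A_1 & a_{12}\mathbf 1\\ a_{21}\mathbf 1 & A_2\end{pmatrix}$, where $A_i$ is the adjacency matrix of $G_i$ and $a_{ij}\mathbf 1$ is the all-$a_{ij}$ matrix of appropriate size; i.e. every vertex of $G_i$ is joined to every vertex of $G_j$ whenever $v_i$ is adjacent to $v_j$ in $G$. *)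

theory Defs
  imports "Jordan_Normal_Form.Char_Poly" "HOL-Computational_Algebra.Fundamental_Theorem_Algebra"
begin

definition energy :: "real mat \<Rightarrow> real" where
  "energy A = (\<Sum>z\<in># proots (char_poly (map_mat complex_of_real A)). cmod z)"

definition simple_graph_adj :: "nat \<Rightarrow> real mat \<Rightarrow> bool" where
  "simple_graph_adj n A \<longleftrightarrow> n \<ge> 1 \<and> A \<in> carrier_mat n n \<and>
     (\<forall>i<n. \<forall>j<n. A $$ (i,j) \<in> {0,1} \<and> A $$ (i,j) = A $$ (j,i)) \<and>
     (\<forall>i<n. A $$ (i,i) = 0)"

definition regular_graph_adj :: "nat \<Rightarrow> real mat \<Rightarrow> bool" where
  "regular_graph_adj n A \<longleftrightarrow> simple_graph_adj n A \<and>
     (\<exists>r. \<forall>i<n. (\<Sum>j<n. A $$ (i,j)) = r)"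

definition loopless_digraph_adj2 :: "real mat \<Rightarrow> bool" where
  "loopless_digraph_adj2 A \<longleftrightarrow> A \<in> carrier_mat 2 2 \<and>
     A $$ (0,0) = 0 \<and> A $$ (1,1) = 0 \<and> A $$ (0,1) \<in> {0,1} \<and> A $$ (1,0) \<in> {0,1}"

definition joined_union2 :: "real mat \<Rightarrow> real mat \<Rightarrow> real mat \<Rightarrow> real mat" where
  "joined_union2 A A1 A2 = four_block_mat A1 (mat (dim_row A1) (dim_col A2) (\<lambda>_. A $$ (0,1)))
                                          (mat (dim_row A2) (dim_col A1) (\<lambda>_. A $$ (1,0))) A2"

end

theory Submission
  imports Defs
begin

definition cm :: "nat \<Rightarrow> complex mat \<Rightarrow> complex \<Rightarrow> complex mat" where
  "cm n C x = mat n n (\<lambda>(i,j). (if i = j then x else 0) - C $$ (i,j))"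

lemma cm_carrier[simp]: "cm n C x \<in> carrier_mat n n"
  unfolding cm_def by auto

lemma poly_char_poly_cm:
  assumes "C \<in> carrier_mat n n"
  shows "poly (char_poly C) x = det (cm n C x)"
  unfolding char_poly_def
  by (rule poly_det_cong[of _ n], insert assms, auto simp: char_poly_matrix_def cm_def)

lemma rowsum_cm:
  assumes "C \<in> carrier_mat n n" "i < n" "(\<Sum>j\<in>{0..<n}. C $$ (i,j)) = r"
  shows "(\<Sum>j\<in>{0..<n}. cm n C x $$ (i,j)) = x - r"
proof -
  have "(\<Sum>j\<in>{0..<n}. cm n C x $$ (i,j)) = (\<Sum>j\<in>{0..<n}. (if i = j then x else 0) - C $$ (i,j))"
    using assms by (intro sum.cong) (auto simp: cm_def)
  also have "\<dots> = x - r" using assms by (simp add: sum_subtractf)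
  finally show ?thesis .
qed

lemma cm_four_block:
  assumes "C1 \<in> carrier_mat n1 n1" "C2 \<in> carrier_mat n2 n2"
  shows "cm (n1+n2) (four_block_mat C1 (mat n1 n2 (\<lambda>_. a)) (mat n2 n1 (\<lambda>_. b)) C2) x
     = four_block_mat (cm n1 C1 x) (mat n1 n2 (\<lambda>_. -a)) (mat n2 n1 (\<lambda>_. -b)) (cm n2 C2 x)"
  by (rule eq_matI, insert assms, auto simp: cm_def)


lemma step1:
  fixes B1 B2 :: "complex mat"
  assumes B1: "B1 \<in> carrier_mat n1 n1" and B2: "B2 \<in> carrier_mat n2 n2"
    and rs: "\<And>i. i < n1 \<Longrightarrow> (\<Sum>j\<in>{0..<n1}. B1 $$ (i,j)) = d1" and d1: "d1 \<noteq> 0"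
  shows "det (four_block_mat B1 (mat n1 n2 (\<lambda>_. -a)) (mat n2 n1 (\<lambda>_. -b)) B2)
    = det B1 * det (mat n2 n2 (\<lambda>(i,j). B2 $$ (i,j) - a*b*of_nat n1/d1))"
proof -
  let ?N = "four_block_mat B1 (mat n1 n2 (\<lambda>_. -a)) (mat n2 n1 (\<lambda>_. -b)) B2"
  let ?L = "four_block_mat (1\<^sub>m n1) (mat n1 n2 (\<lambda>_. a/d1)) (0\<^sub>m n2 n1) (1\<^sub>m n2)"
  let ?B2' = "mat n2 n2 (\<lambda>(i,j). B2 $$ (i,j) - a*b*of_nat n1/d1)"
  have prod: "?N * ?L = four_block_mat B1 (0\<^sub>m n1 n2) (mat n2 n1 (\<lambda>_. -b)) ?B2'"
  proof -
    have "?N * ?L = four_block_mat (B1 * 1\<^sub>m n1 + mat n1 n2 (\<lambda>_. -a) * 0\<^sub>m n2 n1)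
      (B1 * mat n1 n2 (\<lambda>_. a/d1) + mat n1 n2 (\<lambda>_. -a) * 1\<^sub>m n2)
      (mat n2 n1 (\<lambda>_. -b) * 1\<^sub>m n1 + B2 * 0\<^sub>m n2 n1)
      (mat n2 n1 (\<lambda>_. -b) * mat n1 n2 (\<lambda>_. a/d1) + B2 * 1\<^sub>m n2)"
      by (rule mult_four_block_mat, insert B1 B2, auto)
    also have "B1 * 1\<^sub>m n1 + mat n1 n2 (\<lambda>_. -a) * 0\<^sub>m n2 n1 = B1" using B1 by auto
    also have "mat n2 n1 (\<lambda>_. -b) * 1\<^sub>m n1 + B2 * 0\<^sub>m n2 n1 = mat n2 n1 (\<lambda>_. -b)" using B2 by auto
    also have "B1 * mat n1 n2 (\<lambda>_. a/d1) + mat n1 n2 (\<lambda>_. -a) * 1\<^sub>m n2 = 0\<^sub>m n1 n2"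
    proof (rule eq_matI)
      fix i j assume ij: "i < dim_row (0\<^sub>m n1 n2 :: complex mat)" "j < dim_col (0\<^sub>m n1 n2 :: complex mat)"
      have "(B1 * mat n1 n2 (\<lambda>_. a/d1)) $$ (i,j) = (\<Sum>k\<in>{0..<n1}. B1 $$ (i,k) * (a/d1))"
        using ij B1 by (auto simp: scalar_prod_def intro!: sum.cong)
      also have "\<dots> = (\<Sum>k\<in>{0..<n1}. B1 $$ (i,k)) * (a/d1)" by (rule sum_distrib_right[symmetric])
      also have "\<dots> = d1 * (a/d1)" using rs ij by simp
      also have "\<dots> = a" using d1 by simp
      finally show "(B1 * mat n1 n2 (\<lambda>_. a/d1) + mat n1 n2 (\<lambda>_. -a) * 1\<^sub>m n2) $$ (i,j) = 0\<^sub>m n1 n2 $$ (i,j)"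
        using ij B1 by auto
    qed (insert B1, auto)
    also have "mat n2 n1 (\<lambda>_. -b) * mat n1 n2 (\<lambda>_. a/d1) + B2 * 1\<^sub>m n2 = ?B2'"
    proof (rule eq_matI)
      fix i j assume ij: "i < dim_row ?B2'" "j < dim_col ?B2'"
      have "(mat n2 n1 (\<lambda>_. -b) * mat n1 n2 (\<lambda>_. a/d1)) $$ (i,j) = (\<Sum>k\<in>{0..<n1}. (-b) * (a/d1))"
        using ij by (auto simp: scalar_prod_def intro!: sum.cong)
      also have "\<dots> = - (a*b*of_nat n1/d1)" by simp
      finally show "(mat n2 n1 (\<lambda>_. -b) * mat n1 n2 (\<lambda>_. a/d1) + B2 * 1\<^sub>m n2) $$ (i,j) = ?B2' $$ (i,j)"
        using ij B2 by auto
    qed (insert B2, auto)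
    finally show ?thesis .
  qed
  have dL: "det ?L = 1"
    by (subst det_four_block_mat_lower_left_zero[of _ n1 _ n2], auto)
  have "det (?N * ?L) = det ?N * det ?L"
    by (rule det_mult[of _ "n1+n2"], insert B1 B2, auto)
  hence "det ?N = det (?N * ?L)" using dL by simp
  also have "\<dots> = det B1 * det ?B2'" unfolding prod
    by (rule det_four_block_mat_upper_right_zero[of _ n1 _ n2], insert B1 B2, auto)
  finally show ?thesis .
qed

lemma step2:
  fixes B2 :: "complex mat"
  assumes B2: "B2 \<in> carrier_mat n2 n2"
    and rs: "\<And>i. i < n2 \<Longrightarrow> (\<Sum>j\<in>{0..<n2}. B2 $$ (i,j)) = d2" and d2: "d2 \<noteq> 0"
  shows "det (mat n2 n2 (\<lambda>(i,j). B2 $$ (i,j) - s)) = (1 - s * of_nat n2 / d2) * det B2"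
proof -
  let ?K = "four_block_mat (mat 1 1 (\<lambda>_. 1)) (mat 1 n2 (\<lambda>_. 1)) (mat n2 1 (\<lambda>_. s)) B2"
  let ?P = "four_block_mat (1\<^sub>m 1) (0\<^sub>m 1 n2) (mat n2 1 (\<lambda>_. -s)) (1\<^sub>m n2)"
  let ?Q = "four_block_mat (1\<^sub>m 1) (0\<^sub>m 1 n2) (mat n2 1 (\<lambda>_. -s/d2)) (1\<^sub>m n2)"
  let ?B2' = "mat n2 n2 (\<lambda>(i,j). B2 $$ (i,j) - s)"
  have K: "?K \<in> carrier_mat (1+n2) (1+n2)" using B2 by auto
  have P: "?P \<in> carrier_mat (1+n2) (1+n2)" by auto
  have Q: "?Q \<in> carrier_mat (1+n2) (1+n2)" by auto
  have dP: "det ?P = 1"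
    by (subst det_four_block_mat_upper_right_zero[of _ 1 _ n2], auto)
  have dQ: "det ?Q = 1"
    by (subst det_four_block_mat_upper_right_zero[of _ 1 _ n2], auto)
  have PK: "?P * ?K = four_block_mat (mat 1 1 (\<lambda>_. 1)) (mat 1 n2 (\<lambda>_. 1)) (0\<^sub>m n2 1) ?B2'"
  proof -
    have "?P * ?K = four_block_mat (1\<^sub>m 1 * mat 1 1 (\<lambda>_. 1) + 0\<^sub>m 1 n2 * mat n2 1 (\<lambda>_. s))
       (1\<^sub>m 1 * mat 1 n2 (\<lambda>_. 1) + 0\<^sub>m 1 n2 * B2)
       (mat n2 1 (\<lambda>_. -s) * mat 1 1 (\<lambda>_. 1) + 1\<^sub>m n2 * mat n2 1 (\<lambda>_. s))
       (mat n2 1 (\<lambda>_. -s) * mat 1 n2 (\<lambda>_. 1) + 1\<^sub>m n2 * B2)"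
      by (rule mult_four_block_mat, insert B2, auto)
    also have "\<dots> = four_block_mat (mat 1 1 (\<lambda>_. 1)) (mat 1 n2 (\<lambda>_. 1)) (0\<^sub>m n2 1) ?B2'"
      by (intro arg_cong4[where f = four_block_mat] eq_matI, insert B2,
          auto simp: scalar_prod_def)
    finally show ?thesis .
  qed
  have KQ: "?K * ?Q = four_block_mat (mat 1 1 (\<lambda>_. 1 - s * of_nat n2 / d2)) (mat 1 n2 (\<lambda>_. 1)) (0\<^sub>m n2 1) B2"
  proof -
    have "?K * ?Q = four_block_mat (mat 1 1 (\<lambda>_. 1) * 1\<^sub>m 1 + mat 1 n2 (\<lambda>_. 1) * mat n2 1 (\<lambda>_. -s/d2))
       (mat 1 1 (\<lambda>_. 1) * 0\<^sub>m 1 n2 + mat 1 n2 (\<lambda>_. 1) * 1\<^sub>m n2)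
       (mat n2 1 (\<lambda>_. s) * 1\<^sub>m 1 + B2 * mat n2 1 (\<lambda>_. -s/d2))
       (mat n2 1 (\<lambda>_. s) * 0\<^sub>m 1 n2 + B2 * 1\<^sub>m n2)"
      by (rule mult_four_block_mat, insert B2, auto)
    also have "mat n2 1 (\<lambda>_. s) * 1\<^sub>m 1 + B2 * mat n2 1 (\<lambda>_. -s/d2) = 0\<^sub>m n2 1"
    proof (rule eq_matI)
      fix i j assume ij: "i < dim_row (0\<^sub>m n2 1 :: complex mat)" "j < dim_col (0\<^sub>m n2 1 :: complex mat)"
      have "(B2 * mat n2 1 (\<lambda>_. -s/d2)) $$ (i,j) = (\<Sum>k\<in>{0..<n2}. B2 $$ (i,k) * (-s/d2))"
        using ij B2 by (auto simp: scalar_prod_def intro!: sum.cong)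
      also have "\<dots> = (\<Sum>k\<in>{0..<n2}. B2 $$ (i,k)) * (-s/d2)" by (rule sum_distrib_right[symmetric])
      also have "\<dots> = d2 * (-s/d2)" using rs ij by simp
      also have "\<dots> = -s" using d2 by simp
      finally show "(mat n2 1 (\<lambda>_. s) * 1\<^sub>m 1 + B2 * mat n2 1 (\<lambda>_. -s/d2)) $$ (i,j) = 0\<^sub>m n2 1 $$ (i,j)"
        using ij B2 by auto
    qed (insert B2, auto)
    also have "mat 1 1 (\<lambda>_. 1) * 1\<^sub>m 1 + mat 1 n2 (\<lambda>_. 1) * mat n2 1 (\<lambda>_. -s/d2) = mat 1 1 (\<lambda>_. 1 - s * of_nat n2 / d2)"
      by (rule eq_matI, auto simp: scalar_prod_def)
    also have "mat 1 1 (\<lambda>_. 1) * 0\<^sub>m 1 n2 + mat 1 n2 (\<lambda>_. 1) * 1\<^sub>m n2 = mat 1 n2 (\<lambda>_. (1::complex))"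
      by auto
    also have "mat n2 1 (\<lambda>_. s) * 0\<^sub>m 1 n2 + B2 * 1\<^sub>m n2 = B2" using B2 by auto
    finally show ?thesis .
  qed
  have "det (?P * ?K) = det ?P * det ?K" by (rule det_mult[OF P K])
  hence "det ?K = det (?P * ?K)" using dP by simp
  also have "\<dots> = det (mat 1 1 (\<lambda>_. 1::complex)) * det ?B2'" unfolding PK
    by (rule det_four_block_mat_lower_left_zero[of _ 1 _ n2], insert B2, auto)
  finally have e1: "det ?K = det ?B2'" by (simp add: det_single)
  have "det (?K * ?Q) = det ?K * det ?Q" by (rule det_mult[OF K Q])
  hence "det ?K = det (?K * ?Q)" using dQ by simp
  also have "\<dots> = det (mat 1 1 (\<lambda>_. 1 - s * of_nat n2 / d2)) * det B2" unfolding KQ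
    by (rule det_four_block_mat_lower_left_zero[of _ 1 _ n2], insert B2, auto)
  finally have e2: "det ?K = (1 - s * of_nat n2 / d2) * det B2" by (simp add: det_single)
  show ?thesis using e1 e2 by simp
qed


lemma poly_eq_cofinite:
  fixes p q :: "complex poly"
  assumes "\<And>x. x \<notin> S \<Longrightarrow> poly p x = poly q x" "finite S"
  shows "p = q"
proof (rule ccontr)
  assume "p \<noteq> q"
  hence "p - q \<noteq> 0" by simp
  hence fin: "finite {x. poly (p - q) x = 0}" by (rule poly_roots_finite)
  have "UNIV - S \<subseteq> {x. poly (p - q) x = 0}" using assms(1) by auto
  hence "finite (UNIV - S)" using fin finite_subset by blast
  hence "finite (UNIV :: complex set)" using assms(2) by simp
  thus False using infinite_UNIV_char_0 by blast
qed

lemma key_poly: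
  fixes C1 C2 :: "complex mat"
  assumes C1: "C1 \<in> carrier_mat n1 n1" and C2: "C2 \<in> carrier_mat n2 n2"
    and r1: "\<And>i. i < n1 \<Longrightarrow> (\<Sum>j\<in>{0..<n1}. C1 $$ (i,j)) = r1"
    and r2: "\<And>i. i < n2 \<Longrightarrow> (\<Sum>j\<in>{0..<n2}. C2 $$ (i,j)) = r2"
  shows "char_poly (four_block_mat C1 (mat n1 n2 (\<lambda>_. a)) (mat n2 n1 (\<lambda>_. b)) C2) * [:-r1,1:] * [:-r2,1:]
    = char_poly C1 * char_poly C2 * [:r1*r2 - a*b*of_nat n1*of_nat n2, -(r1+r2), 1:]"
proof (rule poly_eq_cofinite[where S = "{r1, r2}"])
  fix x assume x: "x \<notin> {r1, r2}"
  let ?M = "four_block_mat C1 (mat n1 n2 (\<lambda>_. a)) (mat n2 n1 (\<lambda>_. b)) C2"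
  define d1 where "d1 = x - r1"
  define d2 where "d2 = x - r2"
  have d1: "d1 \<noteq> 0" and d2: "d2 \<noteq> 0" using x by (auto simp: d1_def d2_def)
  have M: "?M \<in> carrier_mat (n1+n2) (n1+n2)" using C1 C2 by auto
  have rs1: "\<And>i. i < n1 \<Longrightarrow> (\<Sum>j\<in>{0..<n1}. cm n1 C1 x $$ (i,j)) = d1"
    unfolding d1_def by (rule rowsum_cm[OF C1], auto intro: r1)
  have rs2: "\<And>i. i < n2 \<Longrightarrow> (\<Sum>j\<in>{0..<n2}. cm n2 C2 x $$ (i,j)) = d2"
    unfolding d2_def by (rule rowsum_cm[OF C2], auto intro: r2)
  have "poly (char_poly ?M) x = det (cm (n1+n2) ?M x)" by (rule poly_char_poly_cm[OF M])
  also have "\<dots> = det (four_block_mat (cm n1 C1 x) (mat n1 n2 (\<lambda>_. -a)) (mat n2 n1 (\<lambda>_. -b)) (cm n2 C2 x))"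
    by (simp add: cm_four_block[OF C1 C2])
  also have "\<dots> = det (cm n1 C1 x) * det (mat n2 n2 (\<lambda>(i,j). cm n2 C2 x $$ (i,j) - a*b*of_nat n1/d1))"
    by (rule step1[OF cm_carrier cm_carrier rs1 d1])
  also have "det (mat n2 n2 (\<lambda>(i,j). cm n2 C2 x $$ (i,j) - a*b*of_nat n1/d1))
     = (1 - a*b*of_nat n1/d1 * of_nat n2 / d2) * det (cm n2 C2 x)"
    by (rule step2[OF cm_carrier rs2 d2])
  finally have e: "poly (char_poly ?M) x = det (cm n1 C1 x) * ((1 - a*b*of_nat n1/d1 * of_nat n2 / d2) * det (cm n2 C2 x))" .
  have p1: "poly (char_poly C1) x = det (cm n1 C1 x)" by (rule poly_char_poly_cm[OF C1])
  have p2: "poly (char_poly C2) x = det (cm n2 C2 x)" by (rule poly_char_poly_cm[OF C2])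
  have "poly (char_poly ?M * [:-r1,1:] * [:-r2,1:]) x = poly (char_poly ?M) x * d1 * d2"
    by (simp add: d1_def d2_def algebra_simps)
  also have "\<dots> = det (cm n1 C1 x) * det (cm n2 C2 x) * (d1 * d2 - a*b*of_nat n1*of_nat n2)"
    unfolding e using d1 d2 by (simp add: field_simps)
  also have "\<dots> = poly (char_poly C1 * char_poly C2 * [:r1*r2 - a*b*of_nat n1*of_nat n2, -(r1+r2), 1:]) x"
    by (simp add: p1 p2 d1_def d2_def algebra_simps)
  finally show "poly (char_poly ?M * [:-r1,1:] * [:-r2,1:]) x = poly (char_poly C1 * char_poly C2 * [:r1*r2 - a*b*of_nat n1*of_nat n2, -(r1+r2), 1:]) x" .
qed simp


lemma char_poly_nz: "C \<in> carrier_mat n n \<Longrightarrow> char_poly C \<noteq> 0"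
  using degree_monic_char_poly[of C n] by auto

lemma reg_facts:
  assumes "regular_graph_adj n A"
  shows "\<exists>r. (\<forall>i<n. (\<Sum>j\<in>{0..<n}. A $$ (i,j)) = r) \<and> 0 \<le> r \<and> r + 1 \<le> real n"
proof -
  from assms have s: "simple_graph_adj n A" and "\<exists>r. \<forall>i<n. (\<Sum>j<n. A $$ (i,j)) = r"
    unfolding regular_graph_adj_def by auto
  then obtain r where r: "\<forall>i<n. (\<Sum>j<n. A $$ (i,j)) = r" by auto
  from s have n: "n \<ge> 1" and ent: "\<forall>i<n. \<forall>j<n. A $$ (i,j) \<in> {0,1}" and dg: "A $$ (0,0) = 0"
    unfolding simple_graph_adj_def by auto
  have r0: "r = (\<Sum>j<n. A $$ (0,j))" using r n by auto
  have "(\<Sum>j<n. A $$ (0,j)) = A $$ (0,0) + (\<Sum>j\<in>{..<n} - {0}. A $$ (0,j))"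
    using n by (subst sum.remove[of _ 0]) auto
  also have "\<dots> = (\<Sum>j\<in>{..<n} - {0}. A $$ (0,j))" using dg by simp
  also have "\<dots> \<le> (\<Sum>j\<in>{..<n} - {0}. 1)"
    using ent n by (intro sum_mono) fastforce
  also have "\<dots> = real n - 1" using n by simp
  finally have up: "r + 1 \<le> real n" using r0 by simp
  have "0 \<le> (\<Sum>j<n. A $$ (0,j))" using ent n by (intro sum_nonneg) fastforce
  hence "0 \<le> r" using r0 by simp
  thus ?thesis using up r by (auto simp: atLeast0LessThan)
qed

lemma quad:
  fixes r1 r2 n1 n2 :: real
  assumes "0 \<le> r1" "0 \<le> r2" "r1 + 1 \<le> n1" "r2 + 1 \<le> n2"
  defines "D \<equiv> (r1 - r2)^2 + 4*n1*n2"
  defines "l1 \<equiv> (r1 + r2 + sqrt D)/2" and "l2 \<equiv> (r1 + r2 - sqrt D)/2"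
  shows "l1 * l2 = r1*r2 - n1*n2" "l1 + l2 = r1 + r2" "\<bar>l1\<bar> + \<bar>l2\<bar> \<ge> r1 + r2 + 2"
proof -
  have D0: "D \<ge> 0" unfolding D_def using assms by (intro add_nonneg_nonneg) auto
  have sq: "sqrt D ^ 2 = D" using D0 by simp
  show "l1 * l2 = r1*r2 - n1*n2" unfolding l1_def l2_def
    using sq by (simp add: D_def field_simps power2_eq_square)
  show "l1 + l2 = r1 + r2" unfolding l1_def l2_def by (simp add: field_simps)
  have "(r1 + r2 + 2)^2 \<le> D" unfolding D_def
  proof -
    have "(r1+1)*(r2+1) \<le> n1*n2" using assms by (intro mult_mono) auto
    thus "(r1 + r2 + 2)^2 \<le> (r1 - r2)^2 + 4*n1*n2" by (simp add: power2_eq_square algebra_simps)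
  qed
  hence "r1 + r2 + 2 \<le> sqrt D" using assms real_le_rsqrt by auto
  moreover have "\<bar>l1\<bar> + \<bar>l2\<bar> \<ge> l1 - l2" by simp
  moreover have "l1 - l2 = sqrt D" unfolding l1_def l2_def by (simp add: field_simps)
  ultimately show "\<bar>l1\<bar> + \<bar>l2\<bar> \<ge> r1 + r2 + 2" by linarith
qed


lemma char_poly_zero1: "char_poly (0\<^sub>m 1 1 :: complex mat) = [:0,1:]"
proof (rule poly_eq_cofinite[where S = "{}"])
  fix x :: complex
  have "poly (char_poly (0\<^sub>m 1 1 :: complex mat)) x = det (cm 1 (0\<^sub>m 1 1) x)"
    by (rule poly_char_poly_cm) auto
  also have "\<dots> = x" by (subst det_single) (auto simp: cm_def)
  finally show "poly (char_poly (0\<^sub>m 1 1 :: complex mat)) x = poly [:0,1:] x" by simp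
qed simp

lemma rowsum_map:
  assumes "A \<in> carrier_mat n n" "\<forall>i<n. (\<Sum>j\<in>{0..<n}. A $$ (i,j)) = r" "i < n"
  shows "(\<Sum>j\<in>{0..<n}. map_mat complex_of_real A $$ (i,j)) = complex_of_real r"
proof -
  have "(\<Sum>j\<in>{0..<n}. map_mat complex_of_real A $$ (i,j)) = (\<Sum>j\<in>{0..<n}. complex_of_real (A $$ (i,j)))"
    using assms by (intro sum.cong) auto
  also have "\<dots> = complex_of_real (\<Sum>j\<in>{0..<n}. A $$ (i,j))" by simp
  finally show ?thesis using assms by simp
qed

lemma energy_eq: "energy A = (\<Sum>z\<in>#proots (char_poly (map_mat complex_of_real A)). cmod z)"
  unfolding energy_def ..

lemma prl: "(p::complex poly) \<noteq> 0 \<Longrightarrow> proots (p * [:a,1:]) = proots p + {#-a#}"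
  by (subst proots_mult) auto

lemma pr2: "proots ([:a,1:] * [:b,1::complex:]) = {#-a,-b#}"
  by (subst proots_mult) auto

lemma pr3: "p \<noteq> 0 \<Longrightarrow> q \<noteq> 0 \<Longrightarrow> r \<noteq> 0 \<Longrightarrow> proots ((p::complex poly) * q * r) = proots p + proots q + proots r"
  by (subst proots_mult, simp, simp)+ simp

theorem mainTheorem11:
  fixes A A1 A2 :: "real mat" and n1 n2 :: nat
  assumes "regular_graph_adj n1 A1" and "regular_graph_adj n2 A2"
    and "loopless_digraph_adj2 A"
  shows "energy (joined_union2 A A1 A2) \<ge> energy A + energy A1 + energy A2"
proof -
  obtain r1 where r1: "\<forall>i<n1. (\<Sum>j\<in>{0..<n1}. A1 $$ (i,j)) = r1" "0 \<le> r1" "r1 + 1 \<le> real n1"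
    using reg_facts[OF assms(1)] by blast
  obtain r2 where r2: "\<forall>i<n2. (\<Sum>j\<in>{0..<n2}. A2 $$ (i,j)) = r2" "0 \<le> r2" "r2 + 1 \<le> real n2"
    using reg_facts[OF assms(2)] by blast
  have A1c: "A1 \<in> carrier_mat n1 n1" using assms(1) unfolding regular_graph_adj_def simple_graph_adj_def by auto
  have A2c: "A2 \<in> carrier_mat n2 n2" using assms(2) unfolding regular_graph_adj_def simple_graph_adj_def by auto
  have Ac: "A \<in> carrier_mat 2 2" and A00: "A $$ (0,0) = 0" and A11: "A $$ (1,1) = 0"
    and a01: "A $$ (0,1) \<in> {0,1}" and a10: "A $$ (1,0) \<in> {0,1}"
    using assms(3) unfolding loopless_digraph_adj2_def by auto
  define a where "a = A $$ (0,1)"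
  define b where "b = A $$ (1,0)"
  define C1 where "C1 = map_mat complex_of_real A1"
  define C2 where "C2 = map_mat complex_of_real A2"
  have C1c: "C1 \<in> carrier_mat n1 n1" using A1c by (simp add: C1_def)
  have C2c: "C2 \<in> carrier_mat n2 n2" using A2c by (simp add: C2_def)
  have rs1: "\<And>i. i < n1 \<Longrightarrow> (\<Sum>j\<in>{0..<n1}. C1 $$ (i,j)) = complex_of_real r1"
    unfolding C1_def by (rule rowsum_map[OF A1c r1(1)])
  have rs2: "\<And>i. i < n2 \<Longrightarrow> (\<Sum>j\<in>{0..<n2}. C2 $$ (i,j)) = complex_of_real r2"
    unfolding C2_def by (rule rowsum_map[OF A2c r2(1)])
  define M where "M = four_block_mat C1 (mat n1 n2 (\<lambda>_. complex_of_real a)) (mat n2 n1 (\<lambda>_. complex_of_real b)) C2"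
  have hJ: "map_mat complex_of_real (joined_union2 A A1 A2) = M"
    unfolding M_def joined_union2_def C1_def C2_def a_def b_def
    by (rule eq_matI, insert A1c A2c, auto)
  define CA where "CA = four_block_mat (0\<^sub>m 1 1) (mat 1 1 (\<lambda>_. complex_of_real a)) (mat 1 1 (\<lambda>_. complex_of_real b)) (0\<^sub>m 1 1 :: complex mat)"
  have hA: "map_mat complex_of_real A = CA"
  proof (rule eq_matI)
    fix i j assume "i < dim_row CA" "j < dim_col CA"
    hence "i < 2" "j < 2" by (auto simp: CA_def)
    hence "i = 0 \<or> i = 1" "j = 0 \<or> j = 1" by auto
    thus "map_mat complex_of_real A $$ (i,j) = CA $$ (i,j)"
      using Ac A00 A11 by (auto simp: CA_def a_def b_def)
  qed (insert Ac, auto simp: CA_def)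
  have "char_poly CA * [:-0,1:] * [:-0,1:] = char_poly (0\<^sub>m 1 1 :: complex mat) * char_poly (0\<^sub>m 1 1 :: complex mat)
     * [:0*0 - complex_of_real a * complex_of_real b * of_nat 1 * of_nat 1, -(0+0), 1:]"
    unfolding CA_def by (rule key_poly, auto)
  hence "char_poly CA * ([:0,1:] * [:0,1:]) = [:- complex_of_real (a*b), 0, 1:] * ([:0,1:] * [:0,1:])"
    unfolding char_poly_zero1 by (simp add: algebra_simps)
  hence cpA: "char_poly CA = [:- complex_of_real (a*b), 0, 1:]"
    by (subst (asm) mult_right_cancel) auto
  define q where "q = [:complex_of_real r1 * complex_of_real r2 - complex_of_real a * complex_of_real b * of_nat n1 * of_nat n2,
      -(complex_of_real r1 + complex_of_real r2), 1:]"
  have kp: "char_poly M * [:-complex_of_real r1,1:] * [:-complex_of_real r2,1:] = char_poly C1 * char_poly C2 * q"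
    unfolding M_def q_def by (rule key_poly[OF C1c C2c rs1 rs2])
  have Mc: "M \<in> carrier_mat (n1+n2) (n1+n2)" using C1c C2c by (simp add: M_def)
  have nzM: "char_poly M \<noteq> 0" by (rule char_poly_nz[OF Mc])
  have nz1: "char_poly C1 \<noteq> 0" by (rule char_poly_nz[OF C1c])
  have nz2: "char_poly C2 \<noteq> 0" by (rule char_poly_nz[OF C2c])
  have nzq: "q \<noteq> 0" by (simp add: q_def)
  have "proots (char_poly M * [:-complex_of_real r1,1:] * [:-complex_of_real r2,1:])
     = proots (char_poly M) + {#complex_of_real r1#} + {#complex_of_real r2#}"
  proof -
    have h: "char_poly M * [:-complex_of_real r1,1:] \<noteq> 0" by (rule no_zero_divisors[OF nzM]) simp
    show ?thesis by (subst prl[OF h], subst prl[OF nzM]) simp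
  qed
  moreover have "proots (char_poly C1 * char_poly C2 * q) = proots (char_poly C1) + proots (char_poly C2) + proots q"
    using nz1 nz2 nzq by (rule pr3)
  ultimately have pe: "proots (char_poly M) + {#complex_of_real r1#} + {#complex_of_real r2#}
     = proots (char_poly C1) + proots (char_poly C2) + proots q" using kp by simp
  have EJ: "energy (joined_union2 A A1 A2) = (\<Sum>z\<in>#proots (char_poly M). cmod z)"
    unfolding energy_eq hJ ..
  have E1: "energy A1 = (\<Sum>z\<in>#proots (char_poly C1). cmod z)" unfolding energy_eq C1_def ..
  have E2: "energy A2 = (\<Sum>z\<in>#proots (char_poly C2). cmod z)" unfolding energy_eq C2_def ..
  have EA: "energy A = (\<Sum>z\<in>#proots (char_poly CA). cmod z)" unfolding energy_eq hA ..
  have main: "energy (joined_union2 A A1 A2) + r1 + r2 = energy A1 + energy A2 + (\<Sum>z\<in>#proots q. cmod z)"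
  proof -
    have "(\<Sum>z\<in>#proots (char_poly M) + {#complex_of_real r1#} + {#complex_of_real r2#}. cmod z)
      = (\<Sum>z\<in>#proots (char_poly C1) + proots (char_poly C2) + proots q. cmod z)" using pe by simp
    thus ?thesis using r1(2) r2(2) unfolding EJ E1 E2 by simp
  qed
  have ab: "a*b = 0 \<or> a*b = 1" using a01 a10 by (auto simp: a_def b_def)
  thus ?thesis
  proof
    assume ab0: "a*b = 0"
    have "char_poly CA = [:0,1:] * [:0,1:]" using cpA ab0 by simp
    hence "energy A = 0" unfolding EA by (simp only: pr2) simp
    have "q = [:-complex_of_real r1,1:] * [:-complex_of_real r2,1:]"
      using ab0 unfolding q_def by (simp add: algebra_simps flip: of_real_mult)
    hence "(\<Sum>z\<in>#proots q. cmod z) = r1 + r2" using r1(2) r2(2) by (simp only: pr2) simp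
    thus ?thesis using main \<open>energy A = 0\<close> by simp
  next
    assume ab1: "a*b = 1"
    have "char_poly CA = [:1,1:] * [:-1,1:]" using cpA ab1 by simp
    hence "energy A = 2" unfolding EA by (simp only: pr2) simp
    define D where "D = (r1 - r2)^2 + 4*real n1*real n2"
    define l1 where "l1 = (r1 + r2 + sqrt D)/2"
    define l2 where "l2 = (r1 + r2 - sqrt D)/2"
    note qd = quad[OF r1(2) r2(2) r1(3) r2(3), folded D_def, folded l1_def l2_def]
    have "q = [:-complex_of_real l1,1:] * [:-complex_of_real l2,1:]"
    proof -
      have "complex_of_real r1 * complex_of_real r2 - complex_of_real a * complex_of_real b * of_nat n1 * of_nat n2
        = complex_of_real (l1 * l2)" using qd(1) ab1
        by (simp flip: of_real_mult) (metis of_real_mult of_real_of_nat_eq)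
      moreover have "-(complex_of_real r1 + complex_of_real r2) = - complex_of_real (l1 + l2)"
        using qd(2) by simp
      ultimately show ?thesis unfolding q_def by (simp add: algebra_simps)
    qed
    hence "(\<Sum>z\<in>#proots q. cmod z) = \<bar>l1\<bar> + \<bar>l2\<bar>" by (simp only: pr2) simp
    thus ?thesis using main \<open>energy A = 2\<close> qd(3) by simp
  qed
qed

end
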